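(* Let $T\ge 2$, let $z_{1:T}\in[V]^T$ with last token $z_T=q$, and suppose the orthonormality assumption (A) holds. For $v\in[V]$ let $f(v)=\#\{s\in\{2,\dots,T\}: z_{s-1}=q,\ z_s=v\}$, the number of occurrences of the pattern "$q\,v$" in $z_{1:T}$. Let $N=\sum_{v'=1}^{V}f(v')+\mathbf 1\{z_1=q\}$ and assume $N\ge 1$. Then for every $v\in[V]$ and every fixed $\tau_3>0$, $$\lim_{\tau_2\to\infty}\ \lim_{\tau_1\to\infty}\ \xi_v(\tau_1,\tau_2,\tau_3)\;=\;\log\pi_b(v\mid q)\;+\;\tau_3\cdot\frac{f(v)+\mathbf 1\{v=q\}\,\mathbf 1\{z_1=q\}}{N}.$$
   Context: Vocabulary $[V]=\{1,\dots,V\}$, dimension $d$. Given: embedding vectors $w_E(v)\in\mathbb R^d$ and unembedding vectors $w_U(v)\in\mathbb R^d$ for $v\in[V]$; relative positional vectors $r_0,r_{-1},\dots,r_{-(T-1)}\in\mathbb R^d$; matrices $\Phi_1,W_V^2\in\mathbb R^{d\times d}$; a bigram kernel $\pi_b(u\mid v)>0$ with $\sum_u\pi_b(u\mid v)=1$; parameters $\tau_1,\tau_2,\tau_3>0$. $\sigma$ denotes the softmax. The two-layer transformer with relative positional encoding ("stronger associative memory transformer") acts on $z_{1:T}\in[V]^T$ as follows. Set $W_K^1=\tau_1\sum_{k\in[V]}w_E(k)r_{-1}^\top$, $W_K^2=\tau_2\sum_{k\in[V]}w_E(k)(\Phi_1w_E(k))^\top$, $W_O^2=\tau_3\sum_{v\in[V]}w_U(v)(W_V^2w_E(v))^\top$.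 First layer: for $t\in[T]$ and $s\in[t]$, let $a_{t,s}=(w_E(z_s)+r_{s-t})^\top (W_K^1)^\top w_E(z_t)$ and $x^{(1)}_t=\sum_{s=1}^t\sigma(a_{t,\cdot})_s\,\Phi_1w_E(z_s)+w_E(z_t)$. Second layer: for $s\in[T]$ let $b_s=(x_s^{(1)})^\top (W_K^2)^\top x_T^{(1)}$ and $x_T^{(2)}=\sum_{s=1}^T\sigma(b)_s\,W_O^2W_V^2x_s^{(1)}+x_T^{(1)}$. Feed-forward layer: $W_1\in\mathbb R^{V\times d}$ has $v$-th row $w_E(v)^\top$, $W_2\in\mathbb R^{d\times V}$ has $v$-th column $\sum_{u=1}^V\log\pi_b(u\mid v)\,w_U(u)$, and $x_T=W_2\,\mathrm{ReLU}(W_1x_T^{(2)})+x_T^{(2)}$. The logits are $\xi_v=w_U(v)^\top x_T$ for $v\in[V]$ (written $\xi_v(\tau_1,\tau_2,\tau_3)$ to show dependence on the parameters). The associative memory transformer is the case $\tau_1=\tau_2=\tau_3=1$. Orthonormality assumption (A): the $3V+T$ vectors $w_E(v),\ \Phi_1w_E(v),\ w_U(v)$ ($v\in[V]$) and $r_{-i}$ ($0\le i\le T-1$) form an orthonormal family in $\mathbb R^d$, and the $2V$ vectors $W_V^2w_E(v),\ W_V^2\Phi_1w_E(v)$ ($v\in[V]$) form an orthonormal family in $\mathbb R^d$. *)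

theory Defs
  imports "HOL-Analysis.Analysis"
begin

text \<open>Vocabulary [V] is the finite type 'v (V = CARD('v)); the ambient space R^d is real^'d.
  Positions are natural numbers 1..T; a token sequence is z :: nat => 'v (only z 1..z T matter).
  Relative positional vectors: r i stands for r_{-i}, 0 <= i <= T-1.
  pib u w stands for pi_b(u | w).\<close>

definition outer :: "real^'n \<Rightarrow> real^'m \<Rightarrow> real^'m^'n" where
  "outer x y = (\<chi> i j. x $ i * y $ j)"

definition softmax :: "'a set \<Rightarrow> ('a \<Rightarrow> real) \<Rightarrow> 'a \<Rightarrow> real" where
  "softmax A a s = exp (a s) / (\<Sum>s'\<in>A. exp (a s'))"

definition xi :: "('v::finite \<Rightarrow> real^'d::finite) \<Rightarrow> ('v \<Rightarrow> real^'d) \<Rightarrow> (nat \<Rightarrow> real^'d)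
    \<Rightarrow> real^'d^'d \<Rightarrow> real^'d^'d \<Rightarrow> ('v \<Rightarrow> 'v \<Rightarrow> real) \<Rightarrow> nat \<Rightarrow> (nat \<Rightarrow> 'v)
    \<Rightarrow> real \<Rightarrow> real \<Rightarrow> real \<Rightarrow> 'v \<Rightarrow> real" where
  "xi wE wU r \<Phi>1 WV2 pib T z \<tau>1 \<tau>2 \<tau>3 v = (let
     WK1 = \<tau>1 *\<^sub>R (\<Sum>k\<in>UNIV. outer (wE k) (r 1));
     WK2 = \<tau>2 *\<^sub>R (\<Sum>k\<in>UNIV. outer (wE k) (\<Phi>1 *v wE k));
     WO2 = \<tau>3 *\<^sub>R (\<Sum>u\<in>UNIV. outer (wU u) (WV2 *v wE u));
     a = (\<lambda>t s. (wE (z s) + r (t - s)) \<bullet> (transpose WK1 *v wE (z t)));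
     x1 = (\<lambda>t. (\<Sum>s\<in>{1..t}. softmax {1..t} (a t) s *\<^sub>R (\<Phi>1 *v wE (z s))) + wE (z t));
     b = (\<lambda>s. x1 s \<bullet> (transpose WK2 *v x1 T));
     x2 = (\<Sum>s\<in>{1..T}. softmax {1..T} b s *\<^sub>R ((WO2 ** WV2) *v x1 s)) + x1 T;
     W1 = ((\<chi> u. wE u) :: real^'d^'v);
     W2 = ((\<chi> i u. (\<Sum>w\<in>UNIV. ln (pib w u) *\<^sub>R wU w) $ i) :: real^'v^'d);
     xT = W2 *v (\<chi> u. max 0 ((W1 *v x2) $ u)) + x2
   in wU v \<bullet> xT)"

datatype 'v oidx = OE 'v | OP 'v | OU 'v | OR nat

definition orthonormal_A :: "('v::finite \<Rightarrow> real^'d::finite) \<Rightarrow> ('v \<Rightarrow> real^'d) \<Rightarrow> (nat \<Rightarrow> real^'d)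
    \<Rightarrow> real^'d^'d \<Rightarrow> real^'d^'d \<Rightarrow> nat \<Rightarrow> bool" where
  "orthonormal_A wE wU r \<Phi>1 WV2 T \<longleftrightarrow>
     (let F = (\<lambda>i. case i of OE v \<Rightarrow> wE v | OP v \<Rightarrow> \<Phi>1 *v wE v | OU v \<Rightarrow> wU v | OR n \<Rightarrow> r n);
          I = range OE \<union> range OP \<union> range OU \<union> OR ` {..<T};
          G = (\<lambda>i. case i of Inl v \<Rightarrow> WV2 *v wE v | Inr v \<Rightarrow> WV2 *v (\<Phi>1 *v wE v))
      in (\<forall>i\<in>I. \<forall>j\<in>I. F i \<bullet> F j = (if i = j then 1 else 0)) \<and>
         (\<forall>i j. G i \<bullet> G j = (if i = j then 1 else 0)))"

definition pattern_count :: "(nat \<Rightarrow> 'v) \<Rightarrow> nat \<Rightarrow> 'v \<Rightarrow> 'v \<Rightarrow> nat" where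
  "pattern_count z T q v = card {s\<in>{2..T}. z (s - 1) = q \<and> z s = v}"

definition Ncount :: "(nat \<Rightarrow> 'v::finite) \<Rightarrow> nat \<Rightarrow> 'v \<Rightarrow> nat" where
  "Ncount z T q = (\<Sum>v'\<in>UNIV. pattern_count z T q v') + (if z 1 = q then 1 else 0)"

end

theory Submission
  imports Defs
begin

lemma mv_sum: "(A::real^'n::finite^'m::finite) *v (\<Sum>k\<in>S. f k) = (\<Sum>k\<in>S. A *v f k)"
  using linear_sum[OF matrix_vector_mul_linear[of A]] by simp

lemma outer_sum_mv:
  "(\<Sum>k\<in>S. outer (f k :: real^'n::finite) (g k :: real^'m::finite)) *v w = (\<Sum>k\<in>S. (g k \<bullet> w) *\<^sub>R f k)"
  proof (subst vec_eq_iff, intro allI)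
  fix i
  have "((\<Sum>k\<in>S. outer (f k) (g k)) *v w) $ i = (\<Sum>j\<in>UNIV. (\<Sum>k\<in>S. f k $ i * g k $ j) * w $ j)"
    by (simp add: matrix_vector_mult_def outer_def)
  also have "... = (\<Sum>j\<in>UNIV. \<Sum>k\<in>S. f k $ i * g k $ j * w $ j)" by (simp add: sum_distrib_right)
  also have "... = (\<Sum>k\<in>S. \<Sum>j\<in>UNIV. f k $ i * g k $ j * w $ j)" by (rule sum.swap)
  also have "... = (\<Sum>k\<in>S. (g k \<bullet> w) * f k $ i)" by (simp add: inner_vec_def sum_distrib_left sum_distrib_right mult_ac)
  finally show "((\<Sum>k\<in>S. outer (f k) (g k)) *v w) $ i = (\<Sum>k\<in>S. (g k \<bullet> w) *\<^sub>R f k) $ i" by simp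
qed

lemma outer_sum_tmv:
  "transpose (\<Sum>k\<in>S. outer (f k :: real^'n::finite) (g k :: real^'m::finite)) *v w = (\<Sum>k\<in>S. (f k \<bullet> w) *\<^sub>R g k)"
  proof (subst vec_eq_iff, intro allI)
  fix i
  have "(transpose (\<Sum>k\<in>S. outer (f k) (g k)) *v w) $ i = (\<Sum>j\<in>UNIV. (\<Sum>k\<in>S. f k $ j * g k $ i) * w $ j)"
    by (simp add: matrix_vector_mult_def outer_def transpose_def)
  also have "... = (\<Sum>j\<in>UNIV. \<Sum>k\<in>S. f k $ j * g k $ i * w $ j)" by (simp add: sum_distrib_right)
  also have "... = (\<Sum>k\<in>S. \<Sum>j\<in>UNIV. f k $ j * g k $ i * w $ j)" by (rule sum.swap)
  also have "... = (\<Sum>k\<in>S. (f k \<bullet> w) * g k $ i)" by (simp add: inner_vec_def sum_distrib_left sum_distrib_right mult_ac)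
  finally show "(transpose (\<Sum>k\<in>S. outer (f k) (g k)) *v w) $ i = (\<Sum>k\<in>S. (f k \<bullet> w) *\<^sub>R g k) $ i" by simp
qed

lemma smul_mv: "((c::real) *\<^sub>R (A::real^'n::finite^'m::finite)) *v x = c *\<^sub>R (A *v x)"
  by (simp add: vec_eq_iff matrix_vector_mult_def sum_distrib_left mult.assoc)

lemma softmax_cong: "(\<And>x. x \<in> A \<Longrightarrow> f x = g x) \<Longrightarrow> s \<in> A \<Longrightarrow> softmax A f s = softmax A g s"
  unfolding softmax_def by (simp cong: sum.cong)

lemma exp_neg_lim: "((\<lambda>x::real. exp (- x)) \<longlongrightarrow> 0) at_top"
  by (intro filterlim_compose[OF exp_at_bot] filterlim_uminus_at_bot_at_top)

lemma ortho_facts: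
  fixes wE wU :: "'v::finite \<Rightarrow> real^'d::finite"
  assumes "orthonormal_A wE wU r \<Phi>1 WV2 T"
  shows "wE i \<bullet> wE j = (if i = j then 1 else 0)"
    "wE i \<bullet> (\<Phi>1 *v wE j) = 0" "(\<Phi>1 *v wE j) \<bullet> wE i = 0"
    "(\<Phi>1 *v wE i) \<bullet> (\<Phi>1 *v wE j) = (if i = j then 1 else 0)"
    "wE i \<bullet> wU j = 0" "wU j \<bullet> wE i = 0"
    "(\<Phi>1 *v wE i) \<bullet> wU j = 0" "wU j \<bullet> (\<Phi>1 *v wE i) = 0"
    "wU i \<bullet> wU j = (if i = j then 1 else 0)"
    "n < T \<Longrightarrow> wE i \<bullet> r n = 0" "n < T \<Longrightarrow> r n \<bullet> wE i = 0"
    "m < T \<Longrightarrow> n < T \<Longrightarrow> r m \<bullet> r n = (if m = n then 1 else 0)"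
    "(WV2 *v wE i) \<bullet> (WV2 *v wE j) = (if i = j then 1 else 0)"
    "(WV2 *v wE i) \<bullet> (WV2 *v (\<Phi>1 *v wE j)) = 0"
proof -
  define F where "F = (\<lambda>i. case i of OE v \<Rightarrow> wE v | OP v \<Rightarrow> \<Phi>1 *v wE v | OU v \<Rightarrow> wU v | OR n \<Rightarrow> r n)"
  define I where "I = (range OE \<union> range OP \<union> range OU \<union> OR ` {..<T} :: 'v oidx set)"
  define G where "G = (\<lambda>i. case i of Inl v \<Rightarrow> WV2 *v wE v | Inr v \<Rightarrow> WV2 *v (\<Phi>1 *v wE v))"
  have H: "\<And>(i::'v oidx) (j::'v oidx). i\<in>I \<Longrightarrow> j\<in>I \<Longrightarrow> F i \<bullet> F j = (if i = j then 1 else 0)"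
    and H2: "\<And>(i::'v + 'v) (j::'v + 'v). G i \<bullet> G j = (if i = j then 1 else 0)"
    using assms unfolding orthonormal_A_def Let_def F_def I_def G_def by blast+
  show "wE i \<bullet> wE j = (if i = j then 1 else 0)" using H[of "OE i" "OE j"] by (simp add: F_def I_def)
  show "wE i \<bullet> (\<Phi>1 *v wE j) = 0" using H[of "OE i" "OP j"] by (simp add: F_def I_def)
  show "(\<Phi>1 *v wE j) \<bullet> wE i = 0" using H[of "OP j" "OE i"] by (simp add: F_def I_def)
  show "(\<Phi>1 *v wE i) \<bullet> (\<Phi>1 *v wE j) = (if i = j then 1 else 0)" using H[of "OP i" "OP j"] by (simp add: F_def I_def)
  show "wE i \<bullet> wU j = 0" using H[of "OE i" "OU j"] by (simp add: F_def I_def)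
  show "wU j \<bullet> wE i = 0" using H[of "OU j" "OE i"] by (simp add: F_def I_def)
  show "(\<Phi>1 *v wE i) \<bullet> wU j = 0" using H[of "OP i" "OU j"] by (simp add: F_def I_def)
  show "wU j \<bullet> (\<Phi>1 *v wE i) = 0" using H[of "OU j" "OP i"] by (simp add: F_def I_def)
  show "wU i \<bullet> wU j = (if i = j then 1 else 0)" using H[of "OU i" "OU j"] by (simp add: F_def I_def)
  show "n < T \<Longrightarrow> wE i \<bullet> r n = 0" using H[of "OE i" "OR n"] by (simp add: F_def I_def)
  show "n < T \<Longrightarrow> r n \<bullet> wE i = 0" using H[of "OR n" "OE i"] by (simp add: F_def I_def)
  show "m < T \<Longrightarrow> n < T \<Longrightarrow> r m \<bullet> r n = (if m = n then 1 else 0)" using H[of "OR m" "OR n"] by (simp add: F_def I_def)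
  show "(WV2 *v wE i) \<bullet> (WV2 *v wE j) = (if i = j then 1 else 0)" using H2[of "Inl i" "Inl j"] by (simp add: G_def)
  show "(WV2 *v wE i) \<bullet> (WV2 *v (\<Phi>1 *v wE j)) = 0" using H2[of "Inl i" "Inr j"] by (simp add: G_def)
qed

lemma scaleR_ind [simp]: "(if P then 1 else 0) *\<^sub>R (x::'a::real_vector) = (if P then x else 0)"
  by simp

lemma sum_ind [simp]: "finite A \<Longrightarrow> (\<Sum>w\<in>A. (f w::real) * (if v = w then 1 else 0)) = (if v \<in> A then f v else 0)"
proof -
  assume "finite A"
  have "(\<Sum>w\<in>A. (f w::real) * (if v = w then 1 else 0)) = (\<Sum>w\<in>A. if v = w then f w else 0)"
    by (rule sum.cong) auto
  then show ?thesis using \<open>finite A\<close> by (simp add: sum.delta)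
qed

definition cc :: "(nat \<Rightarrow> 'v) \<Rightarrow> 'v \<Rightarrow> real \<Rightarrow> nat \<Rightarrow> real" where
  "cc z q \<tau>1 t = (\<Sum>s\<in>{1..t}. softmax {1..t} (\<lambda>s. \<tau>1 * (if s + 1 = t then 1 else 0)) s * (if z s = q then 1 else 0))"

lemma xi_formula:
  fixes wE wU :: "'v::finite \<Rightarrow> real^'d::finite" and r :: "nat \<Rightarrow> real^'d"
    and \<Phi>1 WV2 :: "real^'d^'d" and pib :: "'v \<Rightarrow> 'v \<Rightarrow> real"
    and T :: nat and z :: "nat \<Rightarrow> 'v" and q v :: 'v
  assumes T2: "T \<ge> 2" and zT: "z T = q" and orth: "orthonormal_A wE wU r \<Phi>1 WV2 T"
  shows "xi wE wU r \<Phi>1 WV2 pib T z \<tau>1 \<tau>2 \<tau>3 v = ln (pib v q) + \<tau>3 *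
     (\<Sum>s\<in>{1..T}. softmax {1..T} (\<lambda>s. \<tau>2 * cc z q \<tau>1 s) s * (if z s = v then 1 else 0))"
proof -
  note O = ortho_facts[OF orth]
  define WK1 where "WK1 = \<tau>1 *\<^sub>R (\<Sum>k\<in>UNIV. outer (wE k) (r 1))"
  define WK2 where "WK2 = \<tau>2 *\<^sub>R (\<Sum>k\<in>UNIV. outer (wE k) (\<Phi>1 *v wE k))"
  define WO2 where "WO2 = \<tau>3 *\<^sub>R (\<Sum>u\<in>UNIV. outer (wU u) (WV2 *v wE u))"
  define a where "a = (\<lambda>t s. (wE (z s) + r (t - s)) \<bullet> (transpose WK1 *v wE (z t)))"
  define x1 where "x1 = (\<lambda>t. (\<Sum>s\<in>{1..t}. softmax {1..t} (a t) s *\<^sub>R (\<Phi>1 *v wE (z s))) + wE (z t))"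
  define b where "b = (\<lambda>s. x1 s \<bullet> (transpose WK2 *v x1 T))"
  define x2 where "x2 = (\<Sum>s\<in>{1..T}. softmax {1..T} b s *\<^sub>R ((WO2 ** WV2) *v x1 s)) + x1 T"
  define W1 where "W1 = ((\<chi> u. wE u) :: real^'d^'v)"
  define W2 where "W2 = ((\<chi> i u. (\<Sum>w\<in>UNIV. ln (pib w u) *\<^sub>R wU w) $ i) :: real^'v^'d)"
  define xT where "xT = W2 *v (\<chi> u. max 0 ((W1 *v x2) $ u)) + x2"
  have xi_eq: "xi wE wU r \<Phi>1 WV2 pib T z \<tau>1 \<tau>2 \<tau>3 v = wU v \<bullet> xT"
    unfolding xi_def Let_def xT_def x2_def b_def x1_def a_def W1_def W2_def WK1_def WK2_def WO2_def
    by (rule refl)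
  have tk1: "\<And>t. transpose WK1 *v wE (z t) = \<tau>1 *\<^sub>R r 1"
    unfolding WK1_def transpose_scalar smul_mv outer_sum_tmv by (simp add: O)
  have ha: "\<And>t s. t \<le> T \<Longrightarrow> s \<in> {1..t} \<Longrightarrow> a t s = \<tau>1 * (if s + 1 = t then 1 else 0)"
  proof -
    fix t s assume "t \<le> T" "s \<in> {1..t}"
    then have "t - s < T" "1 < T" using T2 by auto
    then show "a t s = \<tau>1 * (if s + 1 = t then 1 else 0)"
      unfolding a_def tk1 using \<open>s \<in> {1..t}\<close> by (auto simp: inner_add_left O)
  qed
  define p where "p = (\<lambda>t s::nat. softmax {1..t} (\<lambda>s. \<tau>1 * (if s + 1 = t then 1 else 0)) s)"
  have hx1: "\<And>t. t \<le> T \<Longrightarrow> x1 t = (\<Sum>s\<in>{1..t}. p t s *\<^sub>R (\<Phi>1 *v wE (z s))) + wE (z t)"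
    unfolding x1_def p_def using ha by (auto intro!: sum.cong softmax_cong)
  have wEx1T: "\<And>k. wE k \<bullet> x1 T = (if k = q then 1 else 0)"
    by (simp add: hx1 inner_add_right inner_sum_right O zT)
  have tk2: "transpose WK2 *v x1 T = \<tau>2 *\<^sub>R (\<Phi>1 *v wE q)"
    unfolding WK2_def transpose_scalar smul_mv outer_sum_tmv by (simp add: wEx1T)
  have hb: "\<And>s. s \<le> T \<Longrightarrow> b s = \<tau>2 * cc z q \<tau>1 s"
    unfolding b_def tk2 cc_def by (simp add: hx1 inner_add_left inner_sum_left O p_def sum_distrib_left)
  have hWO: "\<And>s. s \<le> T \<Longrightarrow> (WO2 ** WV2) *v x1 s = \<tau>3 *\<^sub>R wU (z s)"
    unfolding matrix_vector_mul_assoc[symmetric] WO2_def smul_mv outer_sum_mv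
    by (simp add: hx1 mv_sum matrix_vector_right_distrib matrix_vector_mult_scaleR inner_add_right inner_sum_right O)
  define \<sigma> where "\<sigma> = (\<lambda>s. softmax {1..T} (\<lambda>s. \<tau>2 * cc z q \<tau>1 s) s)"
  have hx2: "x2 = (\<Sum>s\<in>{1..T}. \<sigma> s *\<^sub>R (\<tau>3 *\<^sub>R wU (z s))) + x1 T"
    unfolding x2_def \<sigma>_def using hb hWO by (auto intro!: sum.cong softmax_cong)
  have W1x2: "\<And>u. (W1 *v x2) $ u = (if u = q then 1 else 0)"
  proof -
    fix u
    have "(W1 *v x2) $ u = wE u \<bullet> x2"
      by (simp add: W1_def matrix_vector_mult_def inner_vec_def)
    also have "\<dots> = (if u = q then 1 else 0)"
      by (simp add: hx2 inner_add_right inner_sum_right O wEx1T)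
    finally show "(W1 *v x2) $ u = (if u = q then 1 else 0)" .
  qed
  have relu: "(\<chi> u. max 0 ((W1 *v x2) $ u)) = (\<chi> u. if u = q then 1 else 0)"
    by (simp add: W1x2 vec_eq_iff)
  have W2r: "W2 *v (\<chi> u. if u = q then 1 else 0) = (\<Sum>w\<in>UNIV. ln (pib w q) *\<^sub>R wU w)"
    by (simp add: W2_def matrix_vector_mult_def vec_eq_iff if_distrib cong: if_cong)
  have "wU v \<bullet> xT = ln (pib v q) + wU v \<bullet> x2"
    unfolding xT_def relu W2r by (simp add: inner_add_right inner_sum_right O)
  also have "wU v \<bullet> x2 = \<tau>3 * (\<Sum>s\<in>{1..T}. \<sigma> s * (if z s = v then 1 else 0))"
    by (simp add: hx2 inner_add_right inner_sum_right O hx1 sum_distrib_left mult_ac; auto intro!: sum.cong)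
  finally show ?thesis unfolding xi_eq \<sigma>_def .
qed

lemma softmax_tendsto:
  assumes "finite A" "A \<noteq> {}" "s \<in> A" "\<And>s. s \<in> A \<Longrightarrow> ((\<lambda>x. f x s) \<longlongrightarrow> L s) F"
  shows "((\<lambda>x. softmax A (f x) s) \<longlongrightarrow> softmax A L s) F"
proof -
  have "(\<Sum>s'\<in>A. exp (L s')) > 0" using assms(1,2) by (intro sum_pos) auto
  then show ?thesis unfolding softmax_def
    using assms by (intro tendsto_divide tendsto_exp tendsto_sum) auto
qed

lemma softmax_lim:
  fixes C :: "'a \<Rightarrow> real"
  assumes fin: "finite A" and sA: "s \<in> A" and C01: "\<And>x. x \<in> A \<Longrightarrow> C x = 0 \<or> C x = 1"
    and Kpos: "(\<Sum>x\<in>A. C x) > 0"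
  shows "((\<lambda>\<tau>. softmax A (\<lambda>x. \<tau> * C x) s) \<longlongrightarrow> C s / (\<Sum>x\<in>A. C x)) at_top"
proof -
  define K where "K = (\<Sum>x\<in>A. C x)"
  define M where "M = (\<Sum>x\<in>A. 1 - C x)"
  have ex: "\<And>\<tau> x. x \<in> A \<Longrightarrow> exp (\<tau> * C x) = C x * exp \<tau> + (1 - C x)"
    using C01 by fastforce
  have eq: "softmax A (\<lambda>x. \<tau> * C x) s = (C s + (1 - C s) * exp (- \<tau>)) / (K + M * exp (- \<tau>))" for \<tau>
  proof -
    have "(\<Sum>x\<in>A. exp (\<tau> * C x)) = (\<Sum>x\<in>A. C x * exp \<tau> + (1 - C x))"
      using ex by (rule sum.cong[OF refl])
    also have "\<dots> = K * exp \<tau> + M" by (simp add: K_def M_def sum.distrib sum_distrib_right)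
    finally have den: "(\<Sum>x\<in>A. exp (\<tau> * C x)) = K * exp \<tau> + M" .
    have Mnn: "M \<ge> 0" unfolding M_def using C01 by (intro sum_nonneg) fastforce
    have "K > 0" using Kpos K_def by simp
    have pos: "K * exp \<tau> + M > 0" using \<open>K > 0\<close> Mnn by (simp add: add_pos_nonneg)
    have pos2: "K + M * exp (- \<tau>) > 0" using \<open>K > 0\<close> Mnn by (simp add: add_pos_nonneg)
    have "softmax A (\<lambda>x. \<tau> * C x) s = (C s * exp \<tau> + (1 - C s)) / (K * exp \<tau> + M)"
      unfolding softmax_def den using ex[OF sA] by simp
    also have "\<dots> = (C s + (1 - C s) * exp (- \<tau>)) / (K + M * exp (- \<tau>))"
      using pos pos2 by (simp add: divide_simps exp_minus)
    finally show ?thesis .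
  qed
  have "((\<lambda>\<tau>. (C s + (1 - C s) * exp (- \<tau>)) / (K + M * exp (- \<tau>))) \<longlongrightarrow> (C s + (1 - C s) * 0) / (K + M * 0)) at_top"
    using Kpos K_def by (intro tendsto_intros exp_neg_lim) auto
  then show ?thesis unfolding eq K_def by simp
qed

lemma real_card_filter: "finite A \<Longrightarrow> real (card {x\<in>A. P x}) = (\<Sum>x\<in>A. if P x then 1 else 0)"
  by (simp add: sum.inter_filter[symmetric])

definition C1 :: "(nat \<Rightarrow> 'v) \<Rightarrow> 'v \<Rightarrow> nat \<Rightarrow> real" where
  "C1 z q t = (if t = 1 then (if z 1 = q then 1 else 0) else (if z (t - 1) = q then 1 else 0))"

lemma ind_sum_pred:
  fixes t :: nat
  assumes "t \<ge> 2"
  shows "(\<Sum>s\<in>{1..t}. (if s + 1 = t then 1 else 0) * (f s::real)) = f (t - 1)"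
proof -
  have "(\<Sum>s\<in>{1..t}. (if s + 1 = t then 1 else 0) * f s) = (\<Sum>s\<in>{1..t}. if s = t - 1 then f s else 0)"
    using assms by (intro sum.cong) auto
  also have "\<dots> = f (t - 1)" using assms by (simp add: sum.delta)
  finally show ?thesis .
qed

lemma cc_lim:
  assumes "t \<ge> 1"
  shows "((\<lambda>\<tau>1. cc z q \<tau>1 t) \<longlongrightarrow> C1 z q t) at_top"
proof (cases "t = 1")
  case True
  then show ?thesis by (simp add: cc_def C1_def softmax_def)
next
  case False
  then have t2: "t \<ge> 2" using assms by auto
  have K: "(\<Sum>s\<in>{1..t}. (if s + 1 = t then 1 else 0 :: real)) = 1"
    using ind_sum_pred[OF t2, of "\<lambda>_. 1"] by simp
  have "((\<lambda>\<tau>1. cc z q \<tau>1 t) \<longlongrightarrow> (\<Sum>s\<in>{1..t}. ((if s + 1 = t then 1 else 0) / 1) * (if z s = q then 1 else 0))) at_top"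
    unfolding cc_def
  proof (intro tendsto_sum tendsto_mult_right)
    fix s assume "s \<in> {1..t}"
    then show "((\<lambda>\<tau>1. softmax {1..t} (\<lambda>s. \<tau>1 * (if s + 1 = t then 1 else 0)) s) \<longlongrightarrow> (if s + 1 = t then 1 else 0) / 1) at_top"
      using softmax_lim[of "{1..t}" s "\<lambda>s. if s + 1 = t then 1 else 0"] K by simp
  qed
  also have "(\<Sum>s\<in>{1..t}. ((if s + 1 = t then 1 else 0) / 1) * (if z s = q then 1 else 0)) = C1 z q t"
    using ind_sum_pred[OF t2, of "\<lambda>s. if z s = q then 1 else 0"] False by (simp add: C1_def)
  finally show ?thesis .
qed

lemma split1: "(T::nat) \<ge> 2 \<Longrightarrow> (\<Sum>s\<in>{1..T}. (f s::real)) = f 1 + (\<Sum>s\<in>{2..T}. f s)"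
  by (simp add: sum.atLeast_Suc_atMost numeral_2_eq_2)

lemma sumC1v:
  assumes "T \<ge> 2"
  shows "(\<Sum>s\<in>{1..T}. C1 z q s * (if z s = v then 1 else 0)) =
    real (pattern_count z T q v) + (if v = q \<and> z 1 = q then 1 else 0)"
proof -
  have "(\<Sum>s\<in>{2..T}. C1 z q s * (if z s = v then 1 else 0)) = (\<Sum>s\<in>{2..T}. if z (s - 1) = q \<and> z s = v then 1 else 0)"
    by (intro sum.cong) (auto simp: C1_def)
  also have "\<dots> = real (pattern_count z T q v)"
    unfolding pattern_count_def real_card_filter[OF finite_atLeastAtMost] ..
  finally show ?thesis using split1[OF assms] by (auto simp: C1_def)
qed

lemma sumC1:
  fixes z :: "nat \<Rightarrow> 'v::finite"
  assumes "T \<ge> 2"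
  shows "(\<Sum>s\<in>{1..T}. C1 z q s) = real (Ncount z T q)"
proof -
  have "real (\<Sum>v'\<in>UNIV. pattern_count z T q v') = (\<Sum>v'\<in>UNIV. \<Sum>s\<in>{2..T}. if z (s - 1) = q \<and> z s = v' then 1 else 0)"
    unfolding pattern_count_def of_nat_sum real_card_filter[OF finite_atLeastAtMost] ..
  also have "\<dots> = (\<Sum>s\<in>{2..T}. \<Sum>v'\<in>UNIV. if z (s - 1) = q \<and> z s = v' then 1 else 0)"
    by (rule sum.swap)
  also have "\<dots> = (\<Sum>s\<in>{2..T}. C1 z q s)"
    by (intro sum.cong) (auto simp: C1_def)
  finally have "(\<Sum>s\<in>{2..T}. C1 z q s) = real (\<Sum>v'\<in>UNIV. pattern_count z T q v')" by simp
  then show ?thesis using split1[OF assms] by (simp add: Ncount_def C1_def)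
qed

theorem proposition3:
  fixes wE wU :: "'v::finite \<Rightarrow> real^'d::finite" and r :: "nat \<Rightarrow> real^'d"
    and \<Phi>1 WV2 :: "real^'d^'d" and pib :: "'v \<Rightarrow> 'v \<Rightarrow> real"
    and T :: nat and z :: "nat \<Rightarrow> 'v" and q v :: 'v and \<tau>3 :: real
  assumes "T \<ge> 2" and "z T = q"
    and "\<forall>u w. pib u w > 0" and "\<forall>w. (\<Sum>u\<in>UNIV. pib u w) = 1"
    and "orthonormal_A wE wU r \<Phi>1 WV2 T"
    and "Ncount z T q \<ge> 1"
    and "\<tau>3 > 0"
  shows "\<exists>g. (\<forall>\<tau>2>0. ((\<lambda>\<tau>1. xi wE wU r \<Phi>1 WV2 pib T z \<tau>1 \<tau>2 \<tau>3 v) \<longlongrightarrow> g \<tau>2) at_top) \<and>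
             (g \<longlongrightarrow> ln (pib v q) + \<tau>3 * (real (pattern_count z T q v)
                 + (if v = q \<and> z 1 = q then 1 else 0)) / real (Ncount z T q)) at_top"
proof -
  define g where "g = (\<lambda>\<tau>2. ln (pib v q) + \<tau>3 * (\<Sum>s\<in>{1..T}. softmax {1..T} (\<lambda>s. \<tau>2 * C1 z q s) s * (if z s = v then 1 else 0)))"
  have ne: "{1..T} \<noteq> {}" using assms(1) by auto
  have part1: "((\<lambda>\<tau>1. xi wE wU r \<Phi>1 WV2 pib T z \<tau>1 \<tau>2 \<tau>3 v) \<longlongrightarrow> g \<tau>2) at_top" for \<tau>2
  proof -
    have sm: "((\<lambda>\<tau>1. softmax {1..T} (\<lambda>s. \<tau>2 * cc z q \<tau>1 s) s) \<longlongrightarrow> softmax {1..T} (\<lambda>s. \<tau>2 * C1 z q s) s) at_top"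
      if "s \<in> {1..T}" for s
      using that ne by (intro softmax_tendsto tendsto_mult_left cc_lim) auto
    have "((\<lambda>\<tau>1. ln (pib v q) + \<tau>3 * (\<Sum>s\<in>{1..T}. softmax {1..T} (\<lambda>s. \<tau>2 * cc z q \<tau>1 s) s * (if z s = v then 1 else 0))) \<longlongrightarrow> g \<tau>2) at_top"
      unfolding g_def by (intro tendsto_add tendsto_const tendsto_mult_left tendsto_sum tendsto_mult_right sm)
    then show ?thesis by (simp only: xi_formula[where z=z and q=q, OF assms(1,2,5)])
  qed
  define K where "K = (\<Sum>s\<in>{1..T}. C1 z q s)"
  have K: "K = real (Ncount z T q)" unfolding K_def using sumC1[OF assms(1)] .
  have Kpos: "K > 0" using K assms(6) by simp
  have "(g \<longlongrightarrow> ln (pib v q) + \<tau>3 * (\<Sum>s\<in>{1..T}. (C1 z q s / K) * (if z s = v then 1 else 0))) at_top"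
    unfolding g_def
  proof (intro tendsto_add tendsto_const tendsto_mult_left tendsto_sum tendsto_mult_right)
    fix s assume "s \<in> {1..T}"
    then show "((\<lambda>\<tau>. softmax {1..T} (\<lambda>s. \<tau> * C1 z q s) s) \<longlongrightarrow> C1 z q s / K) at_top"
      unfolding K_def using Kpos[unfolded K_def] by (intro softmax_lim) (auto simp: C1_def)
  qed
  also have "ln (pib v q) + \<tau>3 * (\<Sum>s\<in>{1..T}. (C1 z q s / K) * (if z s = v then 1 else 0)) =
     ln (pib v q) + \<tau>3 * (real (pattern_count z T q v) + (if v = q \<and> z 1 = q then 1 else 0)) / real (Ncount z T q)"
  proof -
    have "(\<Sum>s\<in>{1..T}. (C1 z q s / K) * (if z s = v then 1 else 0)) = (\<Sum>s\<in>{1..T}. C1 z q s * (if z s = v then 1 else 0)) / K"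
      by (simp add: sum_divide_distrib)
    then show ?thesis using sumC1v[OF assms(1), of z q v] K by simp
  qed
  finally show ?thesis using part1 by blast
qed

end
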